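(* Let $X$ be a nonempty finite $T_0$-space and $I$ the identity matrix of order $|X|$. Then (1) $X$ is a totally ordered set if and only if $\det(X_M+I)=1$; and (2) $\det(X_M+I)=0$ if and only if $X$ is not a totally ordered set.
   Context: A finite $T_0$-space is identified with a finite poset via $x\le y$ iff $U_x\subseteq U_y$, where $U_x$ is the minimal open set containing $x$. For a labelling $X=\{x_1,\dots,x_n\}$, $X_M=(x_{i,j})$ is the $n\times n$ matrix with $x_{i,j}=0$ if $x_i\le x_j$ and $x_{i,j}=1$ otherwise. *)

theory Defs
  imports "HOL-Analysis.Abstract_Topological_Spaces" "Jordan_Normal_Form.Determinant"
begin

definition minimal_open :: "'a topology \<Rightarrow> 'a \<Rightarrow> 'a set" where
  "minimal_open T x = \<Inter>{U. openin T U \<and> x \<in> U}"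

text \<open>Specialization order of a finite T0 space: x \<le> y iff U_x \<subseteq> U_y.\<close>
definition top_le :: "'a topology \<Rightarrow> 'a \<Rightarrow> 'a \<Rightarrow> bool" where
  "top_le T x y \<longleftrightarrow> minimal_open T x \<subseteq> minimal_open T y"

definition totally_ordered_space :: "'a topology \<Rightarrow> bool" where
  "totally_ordered_space T \<longleftrightarrow>
     (\<forall>x\<in>topspace T. \<forall>y\<in>topspace T. top_le T x y \<or> top_le T y x)"

text \<open>X_M for the labelling x_i = lab i, i < n: entry 0 if x_i \<le> x_j, else 1.\<close>
definition space_matrix :: "'a topology \<Rightarrow> nat \<Rightarrow> (nat \<Rightarrow> 'a) \<Rightarrow> int mat" where
  "space_matrix T n lab = mat n n (\<lambda>(i,j). if top_le T (lab i) (lab j) then 0 else 1)"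

end

theory Submission
  imports Defs
begin

lemma entry_A:
  assumes "i < n" "j < n"
  shows "(mat n n (\<lambda>(i,j). if Q i j then 0 else 1) + 1\<^sub>m n) $$ (i,j)
         = (if Q i j then 0 else 1) + (if i = j then 1 else (0::int))"
  using assms by simp

lemma perm_down:
  fixes Q :: "nat \<Rightarrow> nat \<Rightarrow> bool"
  assumes trans: "\<And>i j k. i<n \<Longrightarrow> j<n \<Longrightarrow> k<n \<Longrightarrow> Q i j \<Longrightarrow> Q j k \<Longrightarrow> Q i k"
    and refl: "\<And>i. i<n \<Longrightarrow> Q i i"
    and tot: "\<And>i j. i<n \<Longrightarrow> j<n \<Longrightarrow> Q i j \<or> Q j i"
    and p: "p permutes {0..<n}" and pid: "p \<noteq> id"
  shows "\<exists>i<n. p i \<noteq> i \<and> Q i (p i)"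
proof (rule ccontr)
  assume H: "\<not> ?thesis"
  define rk where "rk i = card {j\<in>{0..<n}. Q j i}" for i
  from pid obtain k where k: "p k \<noteq> k" by (auto simp: fun_eq_iff)
  obtain i where i: "p i \<noteq> i" and imin: "\<And>y. p y \<noteq> y \<Longrightarrow> rk i \<le> rk y"
    using ex_has_least_nat[of "\<lambda>i. p i \<noteq> i" k rk] k by blast
  have iin: "i < n" using p i unfolding permutes_def by auto
  have piin: "p i < n" using permutes_in_image[OF p] iin by auto
  have "p (p i) \<noteq> p i" using permutes_inj[OF p] i by (metis injD)
  hence le1: "rk i \<le> rk (p i)" using imin by blast
  have nle: "\<not> Q i (p i)" using H iin i by blast
  hence lp: "Q (p i) i" using tot iin piin by blast
  have "{j\<in>{0..<n}. Q j (p i)} \<subset> {j\<in>{0..<n}. Q j i}"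
    using trans[OF _ piin iin _ lp] nle iin refl[OF iin] by auto
  hence "rk (p i) < rk i" unfolding rk_def by (intro psubset_card_mono) auto
  with le1 show False by simp
qed

lemma det_total:
  fixes Q :: "nat \<Rightarrow> nat \<Rightarrow> bool"
  assumes trans: "\<And>i j k. i<n \<Longrightarrow> j<n \<Longrightarrow> k<n \<Longrightarrow> Q i j \<Longrightarrow> Q j k \<Longrightarrow> Q i k"
    and refl: "\<And>i. i<n \<Longrightarrow> Q i i"
    and tot: "\<And>i j. i<n \<Longrightarrow> j<n \<Longrightarrow> Q i j \<or> Q j i"
  shows "det (mat n n (\<lambda>(i,j). if Q i j then 0 else 1) + 1\<^sub>m n) = (1::int)"
proof -
  let ?A = "mat n n (\<lambda>(i,j). if Q i j then 0 else 1) + 1\<^sub>m n :: int mat"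
  have A: "?A \<in> carrier_mat n n" by simp
  have tm: "signof p * (\<Prod>i = 0..<n. ?A $$ (i, p i)) = (if p = id then 1 else 0)"
    if p: "p permutes {0..<n}" for p
  proof (cases "p = id")
    case True
    have "(\<Prod>i = 0..<n. ?A $$ (i, p i)) = 1"
      using True refl by (intro prod.neutral) simp
    then show ?thesis using True by simp
  next
    case False
    have ex: "\<exists>i<n. p i \<noteq> i \<and> Q i (p i)" by (rule perm_down[OF trans refl tot p False])
    then obtain i where i: "i < n" "p i \<noteq> i" "Q i (p i)" by blast
    have pin: "p i < n" using permutes_in_image[OF p, of i] i(1) by simp
    have z: "?A $$ (i, p i) = 0" using i(1) pin i(2) i(3) by simp
    have "(\<Prod>i = 0..<n. ?A $$ (i, p i)) = 0"
      by (rule prod_zero[OF finite_atLeastLessThan], rule bexI[of _ i]) (use z i(1) in simp_all)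
    then show ?thesis using False by simp
  qed
  have "det ?A = (\<Sum>p\<in>{p. p permutes {0..<n}}. signof p * (\<Prod>i = 0..<n. ?A $$ (i, p i)))"
    by (rule det_def'[OF A])
  also have "\<dots> = (\<Sum>p\<in>{p. p permutes {0..<n}}. (if p = id then 1 else 0))"
    by (rule sum.cong[OF HOL.refl], rule tm) simp
  also have "\<dots> = 1"
    using permutes_id[of "{0..<n}"] by (subst sum.delta) (simp_all add: finite_permutations[OF finite_atLeastLessThan])
  finally show ?thesis .
qed

lemma det_nontotal:
  fixes Q :: "nat \<Rightarrow> nat \<Rightarrow> bool"
  assumes trans: "\<And>i j k. i<n \<Longrightarrow> j<n \<Longrightarrow> k<n \<Longrightarrow> Q i j \<Longrightarrow> Q j k \<Longrightarrow> Q i k"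
    and refl: "\<And>i. i<n \<Longrightarrow> Q i i"
    and antisym: "\<And>i j. i<n \<Longrightarrow> j<n \<Longrightarrow> Q i j \<Longrightarrow> Q j i \<Longrightarrow> i = j"
    and ntot: "a < n" "b < n" "\<not> Q a b" "\<not> Q b a"
  shows "det (mat n n (\<lambda>(i,j). if Q i j then 0 else 1) + 1\<^sub>m n) = (0::int)"
proof -
  let ?A = "mat n n (\<lambda>(i,j). if Q i j then 0 else 1) + 1\<^sub>m n :: int mat"
  define m where "m i = card {j\<in>{0..<n}. Q i j}" for i
  have mlt: "m z < m x" if "x < n" "z < n" "Q x z" "x \<noteq> z" for x z
  proof -
    have "{j\<in>{0..<n}. Q z j} \<subset> {j\<in>{0..<n}. Q x j}"
    proof -
      have "x \<in> {j\<in>{0..<n}. Q x j}" using refl that by auto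
      moreover have "x \<notin> {j\<in>{0..<n}. Q z j}" using antisym that by auto
      ultimately show ?thesis using trans[OF that(1) that(2)] that by auto
    qed
    thus ?thesis unfolding m_def by (intro psubset_card_mono) auto
  qed
  define S where "S = {x. x < n \<and> (\<exists>y<n. \<not> Q x y \<and> \<not> Q y x)}"
  have "a \<in> S" using ntot unfolding S_def by blast
  then obtain x where x: "x \<in> S" and xmin: "\<And>z. z \<in> S \<Longrightarrow> m x \<le> m z"
    using ex_has_least_nat[of "\<lambda>i. i \<in> S" a m] by blast
  have xn: "x < n" using x S_def by auto
  from x obtain y0 where "y0 < n" "\<not> Q x y0" "\<not> Q y0 x" unfolding S_def by blast
  then obtain y where y: "y < n" "\<not> Q x y" "\<not> Q y x"
    and ymin: "\<And>z. z < n \<and> \<not> Q x z \<and> \<not> Q z x \<Longrightarrow> m y \<le> m z"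
    using ex_has_least_nat[of "\<lambda>z. z < n \<and> \<not> Q x z \<and> \<not> Q z x" y0 m] by blast
  have xy: "x \<noteq> y" using y refl xn by auto
  have key: "Q x z \<longleftrightarrow> Q y z" if z: "z < n" "z \<noteq> x" "z \<noteq> y" for z
  proof
    assume "Q x z"
    hence "m z < m x" using mlt xn z by auto
    hence "z \<notin> S" using xmin by force
    hence "Q y z \<or> Q z y" using z y unfolding S_def by auto
    thus "Q y z" using trans[OF xn z(1) y(1) \<open>Q x z\<close>] y by auto
  next
    assume "Q y z"
    hence "m z < m y" using mlt y z by auto
    hence "\<not> (\<not> Q x z \<and> \<not> Q z x)" using ymin z by force
    thus "Q x z" using trans[OF y(1) z(1) xn \<open>Q y z\<close>] y by auto
  qed
  have "row ?A x = row ?A y"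
  proof (rule eq_vecI)
    fix z assume "z < dim_vec (row ?A y)"
    hence z: "z < n" by simp
    show "row ?A x $ z = row ?A y $ z"
      using z xn y key[OF z] refl xy by (cases "z = x"; cases "z = y") auto
  qed simp
  thus ?thesis by (intro det_identical_rows[OF _ xy xn y(1)]) auto
qed

lemma minimal_open_mem:
  assumes "x \<in> topspace T" shows "x \<in> minimal_open T x"
  unfolding minimal_open_def by auto

lemma minimal_open_sub:
  assumes "openin T U" "x \<in> U" shows "minimal_open T x \<subseteq> U"
  using assms unfolding minimal_open_def by auto

theorem mainTheorem16:
  fixes T :: "'a topology" and n :: nat and lab :: "nat \<Rightarrow> 'a"
  assumes "finite (topspace T)"
    and "topspace T \<noteq> {}"
    and "t0_space T"
    and "n = card (topspace T)"
    and "bij_betw lab {..<n} (topspace T)"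
  shows "(totally_ordered_space T \<longleftrightarrow> det (space_matrix T n lab + 1\<^sub>m n) = 1)
       \<and> (det (space_matrix T n lab + 1\<^sub>m n) = 0 \<longleftrightarrow> \<not> totally_ordered_space T)"
proof -
  define Q where "Q i j = top_le T (lab i) (lab j)" for i j
  have SM: "space_matrix T n lab = mat n n (\<lambda>(i,j). if Q i j then 0 else 1)"
    unfolding space_matrix_def Q_def by simp
  have lab_in: "lab i \<in> topspace T" if "i < n" for i
    using assms(5) that by (auto simp: bij_betw_def)
  have trans: "\<And>i j k. i<n \<Longrightarrow> j<n \<Longrightarrow> k<n \<Longrightarrow> Q i j \<Longrightarrow> Q j k \<Longrightarrow> Q i k"
    unfolding Q_def top_le_def by blast
  have refl: "\<And>i. i<n \<Longrightarrow> Q i i" unfolding Q_def top_le_def by blast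
  have antisym: "i = j" if ij: "i<n" "j<n" "Q i j" "Q j i" for i j
  proof (rule ccontr)
    assume ne: "i \<noteq> j"
    have labne: "lab i \<noteq> lab j"
      using assms(5) ne ij(1,2) by (auto simp: bij_betw_def inj_on_def)
    have eq: "minimal_open T (lab i) = minimal_open T (lab j)"
      using ij(3,4) unfolding Q_def top_le_def by blast
    obtain U where U: "openin T U" "lab i \<notin> U \<longleftrightarrow> lab j \<in> U"
      using assms(3) labne lab_in[OF ij(1)] lab_in[OF ij(2)]
      unfolding t0_space_def by blast
    show False
    proof (cases "lab j \<in> U")
      case True
      then show False using U minimal_open_sub[OF U(1) True] eq
          minimal_open_mem[OF lab_in[OF ij(1)]] by blast
    next
      case False
      hence "lab i \<in> U" using U by blast
      then show False using U minimal_open_sub[OF U(1)] eq False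
          minimal_open_mem[OF lab_in[OF ij(2)]] by blast
    qed
  qed
  have tot_iff: "totally_ordered_space T \<longleftrightarrow> (\<forall>i<n. \<forall>j<n. Q i j \<or> Q j i)"
  proof -
    have "topspace T = lab ` {..<n}" using assms(5) by (auto simp: bij_betw_def)
    thus ?thesis unfolding totally_ordered_space_def Q_def by auto
  qed
  show ?thesis
  proof (cases "totally_ordered_space T")
    case True
    hence "det (space_matrix T n lab + 1\<^sub>m n) = 1"
      unfolding SM using tot_iff by (intro det_total[OF trans refl]) auto
    then show ?thesis using True by simp
  next
    case False
    then obtain a b where ab: "a < n" "b < n" "\<not> Q a b" "\<not> Q b a"
      using tot_iff by auto
    have "det (space_matrix T n lab + 1\<^sub>m n) = 0"
      unfolding SM by (rule det_nontotal[OF trans refl antisym ab])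
    then show ?thesis using False by simp
  qed
qed

end
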